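(* Let $A\in\mathbb{R}^{2\times 2}$ with $\mathrm{Re}(\lambda_1(A))>\mathrm{Re}(\lambda_2(A))$ (so $n=2$, $r=1$), and consider the Oja flow $\frac{dU}{dt}=(I_2-UU^{\top})AU$ with $U(0)\in\mathbb{R}^{2}$, $U(0)^{\top}U(0)=1$. Let $K(t)=\Psi^{-1}U(t)$ and $\Sigma=\Psi^{\top}\Psi$ with entries $\Sigma_{11},\Sigma_{22}$ on the diagonal. If $K(0)\neq\begin{bsmallmatrix}0,&\pm\Sigma_{22}^{-1/2}\end{bsmallmatrix}^{\top}$, then $U(t)=\Psi K(t)$ converges to $\mathcal{U}=\{\pm\Sigma_{11}^{-1/2}\psi_1(A)\}$.
   Context: $\Psi=[\psi_1(A),\psi_2(A)]$ is the matrix of unit-norm eigenvectors of $A$ for $\lambda_1(A),\lambda_2(A)$ (these eigenvalues are real and distinct under the hypothesis, so $\Psi$ is real and invertible). *)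

theory Defs
  imports "HOL-Analysis.Analysis"
begin

definition outer :: "real^'n \<Rightarrow> real^'n^'n" where
  "outer u = (\<chi> i j. u $ i * u $ j)"

text \<open>The (complex, with multiplicity) eigenvalues of a real 2x2 matrix are the two roots
  of its characteristic polynomial x^2 - tr(A) x + det(A).\<close>
definition eigenvalues2 :: "real^2^2 \<Rightarrow> complex \<Rightarrow> complex \<Rightarrow> bool" where
  "eigenvalues2 A l1 l2 \<longleftrightarrow>
     l1 + l2 = complex_of_real (trace A) \<and> l1 * l2 = complex_of_real (det A)"

definition unit_eigvec :: "real^2^2 \<Rightarrow> complex \<Rightarrow> real^2 \<Rightarrow> bool" where
  "unit_eigvec A l psi \<longleftrightarrow> norm psi = 1 \<and>
     (\<forall>i. complex_of_real ((A *v psi) $ i) = l * complex_of_real (psi $ i))"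

definition cols2 :: "real^2 \<Rightarrow> real^2 \<Rightarrow> real^2^2" where
  "cols2 p1 p2 = (\<chi> i j. if j = 1 then p1 $ i else p2 $ i)"

end

theory Submission imports Defs begin

definition dt :: "real^2 \<Rightarrow> real^2 \<Rightarrow> real" where
  "dt v x = v$1 * x$2 - v$2 * x$1"

lemma oja_rhs: "((mat 1 - outer u) ** A) *v u = A *v u - (u \<bullet> (A *v u)) *\<^sub>R (u::real^2)"
  by (simp add: vec_eq_iff forall_2 matrix_vector_mult_def matrix_matrix_mult_def outer_def
      mat_def sum_2 inner_vec_def algebra_simps)

lemma eig_real:
  assumes "unit_eigvec A l psi"
  shows "Im l = 0" "A *v psi = Re l *\<^sub>R psi"
proof -
  have n: "norm psi = 1" and e: "\<And>i. complex_of_real ((A *v psi) $ i) = l * complex_of_real (psi $ i)"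
    using assms unfolding unit_eigvec_def by auto
  have "psi \<noteq> 0" using n by auto
  then obtain i where i: "psi $ i \<noteq> 0" by (auto simp: vec_eq_iff)
  have "Im (complex_of_real ((A *v psi) $ i)) = Im (l * complex_of_real (psi $ i))" using e by simp
  then have "Im l * psi $ i = 0" by simp
  then show "Im l = 0" using i by simp
  show "A *v psi = Re l *\<^sub>R psi"
  proof (rule iffD2[OF vec_eq_iff], rule allI)
    fix j
    have "Re (complex_of_real ((A *v psi) $ j)) = Re (l * complex_of_real (psi $ j))" using e by simp
    then show "(A *v psi) $ j = (Re l *\<^sub>R psi) $ j" by simp
  qed
qed

lemma dt_eig:
  fixes A :: "real^2^2"
  assumes "A *v v = m *\<^sub>R v"
  shows "dt v (A *v u) = (trace A - m) * dt v u"
proof -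
  have e1: "A$1$1 * v$1 + A$1$2 * v$2 = m * v$1" and e2: "A$2$1 * v$1 + A$2$2 * v$2 = m * v$2"
    using assms by (simp_all add: vec_eq_iff forall_2 matrix_vector_mult_def sum_2)
  show ?thesis
    unfolding dt_def trace_def sum_2 matrix_vector_mult_def
    by (simp add: sum_2) (use e1 e2 in algebra)
qed

lemma decomp:
  fixes p q u :: "real^2"
  shows "dt q p *\<^sub>R u = dt q u *\<^sub>R p - dt p u *\<^sub>R q"
  by (simp add: vec_eq_iff forall_2 dt_def algebra_simps)

lemma inner2: "(x::real^2) \<bullet> y = x$1 * y$1 + x$2 * y$2"
  by (simp add: inner_vec_def sum_2)

lemma lin_ode:
  fixes y q :: "real \<Rightarrow> real"
  assumes cont: "continuous_on {0..} q"
    and der: "\<forall>t\<ge>0. (y has_real_derivative (c - q t) * y t) (at t within {0..})"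
    and t: "t \<ge> 0"
  shows "y t = y 0 * exp (c * t - integral {0..t} q)"
proof -
  define g where "g s = y s * exp (- (c * s - integral {0..s} q))" for s
  have cq: "continuous_on {0..t} q" using cont by (rule continuous_on_subset) auto
  have "\<exists>k. \<forall>s\<in>{0..t}. g s = k"
  proof (rule has_field_derivative_zero_constant)
    fix s assume s: "s \<in> {0..t}"
    have dy: "(y has_real_derivative (c - q s) * y s) (at s within {0..t})"
      using der s by (auto intro: DERIV_subset)
    have di: "((\<lambda>x. integral {0..x} q) has_real_derivative q s) (at s within {0..t})"
      by (rule integral_has_real_derivative[OF cq s])
    have "(g has_real_derivative (c - q s) * y s * exp (- (c * s - integral {0..s} q))
        + y s * (exp (- (c * s - integral {0..s} q)) * (- (c * 1 - q s)))) (at s within {0..t})"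
      unfolding g_def
      apply (rule derivative_eq_intros dy di refl)+
      by auto
    then show "(g has_real_derivative 0) (at s within {0..t})"
      by (simp add: algebra_simps)
  qed simp
  then obtain k where k: "\<forall>s\<in>{0..t}. g s = k" by blast
  have "g t = g 0" using k t by auto
  then have e: "y t * exp (integral {0..t} q - c * t) = y 0" unfolding g_def by simp
  have "y t = y t * (exp (integral {0..t} q - c * t) * exp (c * t - integral {0..t} q))"
    by (simp flip: exp_add)
  also have "\<dots> = y 0 * exp (c * t - integral {0..t} q)" using e by (simp add: mult.assoc[symmetric])
  finally show ?thesis .
qed

lemma dt_lin: "dt v (x - c *\<^sub>R y) = dt v x - c * dt v y"
  by (simp add: dt_def algebra_simps)

lemma dt_bl: "bounded_linear (dt v)"
proof -
  have "dt v = (\<lambda>x. (vector [- v$2, v$1] :: real^2) \<bullet> x)"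
    by (auto simp: dt_def inner2 fun_eq_iff)
  then show ?thesis by (simp add: bounded_linear_inner_right)
qed

lemma dt_deriv:
  assumes "(U has_vector_derivative U') (at t within S)"
  shows "((\<lambda>t. dt v (U t)) has_real_derivative dt v U') (at t within S)"
  using bounded_linear.has_vector_derivative[OF dt_bl assms]
  by (simp add: has_real_derivative_iff_has_vector_derivative)

lemma inner_deriv:
  fixes U :: "real \<Rightarrow> real^2"
  assumes "(U has_vector_derivative U') (at t within S)"
  shows "((\<lambda>t. U t \<bullet> U t) has_real_derivative 2 * (U t \<bullet> U')) (at t within S)"
proof -
  have "(U has_derivative (\<lambda>x. x *\<^sub>R U')) (at t within S)"
    using assms by (simp add: has_vector_derivative_def)
  from has_derivative_inner[OF this this]
  have "((\<lambda>t. U t \<bullet> U t) has_derivative (\<lambda>h. U t \<bullet> (h *\<^sub>R U') + (h *\<^sub>R U') \<bullet> U t)) (at t within S)" .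
  moreover have "(\<lambda>h. U t \<bullet> (h *\<^sub>R U') + (h *\<^sub>R U') \<bullet> U t) = (*) (2 * (U t \<bullet> U'))"
    by (auto simp: fun_eq_iff inner_commute algebra_simps)
  ultimately show ?thesis by (simp add: has_field_derivative_def)
qed


theorem proposition4:
  fixes A :: "real^2^2" and l1 l2 :: complex and psi1 psi2 :: "real^2"
    and U :: "real \<Rightarrow> real^2"
  assumes eig: "eigenvalues2 A l1 l2"
    and gap: "Re l1 > Re l2"
    and psi1: "unit_eigvec A l1 psi1"
    and psi2: "unit_eigvec A l2 psi2"
    and oja: "\<forall>t\<ge>0. (U has_vector_derivative ((mat 1 - outer (U t)) ** A) *v U t) (at t within {0..})"
    and init: "U 0 \<bullet> U 0 = 1"
    and K0: "let Psi = cols2 psi1 psi2; Sigma = transpose Psi ** Psi; K0 = matrix_inv Psi *v U 0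
             in K0 \<noteq> vector [0, 1 / sqrt (Sigma $ 2 $ 2)] \<and> K0 \<noteq> vector [0, - 1 / sqrt (Sigma $ 2 $ 2)]"
  shows "let Psi = cols2 psi1 psi2; Sigma = transpose Psi ** Psi
         in \<exists>u \<in> {(1 / sqrt (Sigma $ 1 $ 1)) *\<^sub>R psi1, - (1 / sqrt (Sigma $ 1 $ 1)) *\<^sub>R psi1}.
              (U \<longlongrightarrow> u) at_top"
proof -
  define L1 where "L1 = Re l1"
  define L2 where "L2 = Re l2"
  have Ap1: "A *v psi1 = L1 *\<^sub>R psi1" using eig_real[OF psi1] by (simp add: L1_def)
  have Ap2: "A *v psi2 = L2 *\<^sub>R psi2" using eig_real[OF psi2] by (simp add: L2_def)
  have L12: "L1 > L2" using gap by (simp add: L1_def L2_def)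
  have tr: "trace A = L1 + L2"
  proof -
    have "Re (l1 + l2) = Re (complex_of_real (trace A))" using eig by (simp add: eigenvalues2_def)
    then show ?thesis by (simp add: L1_def L2_def)
  qed
  have n1: "psi1 \<bullet> psi1 = 1" and n2: "psi2 \<bullet> psi2 = 1"
    using psi1 psi2 by (auto simp: unit_eigvec_def norm_eq_1)
  define q where "q t = U t \<bullet> (A *v U t)" for t
  define F where "F t = A *v U t - q t *\<^sub>R U t" for t
  have dU: "\<And>t. t \<ge> 0 \<Longrightarrow> (U has_vector_derivative F t) (at t within {0..})"
    using oja by (simp add: oja_rhs F_def q_def)
  have contU: "continuous_on {0..} U"
    unfolding continuous_on_eq_continuous_within
    using dU has_vector_derivative_continuous by (metis atLeast_iff)
  have contAU: "continuous_on {0..} (\<lambda>t. A *v U t)"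
    by (rule linear_continuous_on_compose[OF contU]) simp
  have contq: "continuous_on {0..} q"
    unfolding q_def by (intro continuous_on_inner contU contAU)
  have cont2q: "continuous_on {0..} (\<lambda>t. 2 * q t)"
    by (intro continuous_intros contq)
  have nU: "U t \<bullet> U t = 1" if t: "t \<ge> 0" for t
  proof -
    define s where "s t = U t \<bullet> U t - 1" for t
    have "\<forall>t\<ge>0. (s has_real_derivative (0 - 2 * q t) * s t) (at t within {0..})"
    proof (intro allI impI)
      fix t :: real assume "t \<ge> 0"
      have "(s has_real_derivative 2 * (U t \<bullet> F t) - 0) (at t within {0..})"
        unfolding s_def by (intro derivative_intros inner_deriv dU \<open>t \<ge> 0\<close>)
      moreover have "2 * (U t \<bullet> F t) - 0 = (0 - 2 * q t) * s t"
        by (simp add: F_def s_def q_def inner_diff_right algebra_simps)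
      ultimately show "(s has_real_derivative (0 - 2 * q t) * s t) (at t within {0..})" by metis
    qed
    from lin_ode[OF cont2q this t] have "s t = s 0 * exp (0 * t - integral {0..t} (\<lambda>t. 2 * q t))" .
    then show ?thesis using init by (simp add: s_def)
  qed
  define Q where "Q t = integral {0..t} q" for t
  define \<alpha> where "\<alpha> t = dt psi2 (U t)" for t
  define \<beta> where "\<beta> t = dt psi1 (U t)" for t
  have a_sol: "\<alpha> t = \<alpha> 0 * exp (L1 * t - Q t)" if "t \<ge> 0" for t
  proof -
    have "\<forall>t\<ge>0. (\<alpha> has_real_derivative (L1 - q t) * \<alpha> t) (at t within {0..})"
    proof (intro allI impI)
      fix t :: real assume "t \<ge> 0"
      from dt_deriv[OF dU[OF this], of psi2]
      show "(\<alpha> has_real_derivative (L1 - q t) * \<alpha> t) (at t within {0..})"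
        unfolding \<alpha>_def F_def dt_lin dt_eig[OF Ap2] tr by (simp add: algebra_simps)
    qed
    from lin_ode[OF contq this that] show ?thesis by (simp add: Q_def)
  qed
  have b_sol: "\<beta> t = \<beta> 0 * exp (L2 * t - Q t)" if "t \<ge> 0" for t
  proof -
    have "\<forall>t\<ge>0. (\<beta> has_real_derivative (L2 - q t) * \<beta> t) (at t within {0..})"
    proof (intro allI impI)
      fix t :: real assume "t \<ge> 0"
      from dt_deriv[OF dU[OF this], of psi1]
      show "(\<beta> has_real_derivative (L2 - q t) * \<beta> t) (at t within {0..})"
        unfolding \<beta>_def F_def dt_lin dt_eig[OF Ap1] tr by (simp add: algebra_simps)
    qed
    from lin_ode[OF contq this that] show ?thesis by (simp add: Q_def)
  qed
  define D where "D = dt psi2 psi1"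
  have D0: "D \<noteq> 0"
  proof
    assume "D = 0"
    define c where "c = psi2 \<bullet> psi1"
    have "psi1 = c *\<^sub>R psi2"
      using \<open>D = 0\<close> n2 unfolding D_def c_def dt_def inner2
      by (simp add: vec_eq_iff forall_2) algebra
    then have "A *v psi1 = L2 *\<^sub>R psi1"
      by (metis Ap2 matrix_vector_mult_scaleR scaleR_left_commute)
    with Ap1 have "(L1 - L2) *\<^sub>R psi1 = 0" by (simp add: scaleR_diff_left) (metis)
    with L12 have "psi1 = 0" by simp
    with n1 show False by simp
  qed
  have Udec: "D *\<^sub>R U t = \<alpha> t *\<^sub>R psi1 - \<beta> t *\<^sub>R psi2" for t
    unfolding D_def \<alpha>_def \<beta>_def by (rule decomp)
  define Psi where "Psi = cols2 psi1 psi2"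
  have S11: "(transpose Psi ** Psi) $ 1 $ 1 = 1" and S22: "(transpose Psi ** Psi) $ 2 $ 2 = 1"
    using n1 n2 by (simp_all add: Psi_def cols2_def matrix_matrix_mult_def transpose_def sum_2 inner2
        power2_eq_square)
  have Psiv: "Psi *v vector [a, b] = a *\<^sub>R psi1 + b *\<^sub>R psi2" for a b
    by (simp add: Psi_def cols2_def vec_eq_iff forall_2 matrix_vector_mult_def sum_2)
  have "\<exists>M. Psi ** M = mat 1 \<and> M ** Psi = mat 1"
  proof
    define M :: "real^2^2" where "M = (\<chi> i j. (if i = 1 then (if j = 1 then psi2$2 else - psi2$1)
      else (if j = 1 then - psi1$2 else psi1$1)) / (- D))"
    have dd: "psi1$1*psi2$2 - psi2$1*psi1$2 \<noteq> 0" using D0 by (auto simp: D_def dt_def algebra_simps)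
    then have dd2: "(psi1$1*psi2$2 - psi2$1*psi1$2)^2 \<noteq> 0" by simp
    show "Psi ** M = mat 1 \<and> M ** Psi = mat 1"
      using D0 by (simp add: M_def Psi_def cols2_def D_def dt_def vec_eq_iff forall_2 matrix_matrix_mult_def
        sum_2 mat_def field_simps) (use dd2 in \<open>simp add: power2_eq_square algebra_simps\<close>)
  qed
  then have inv: "matrix_inv Psi ** Psi = mat 1"
    unfolding matrix_inv_def by (rule someI2_ex) auto
  have a00: "\<alpha> 0 \<noteq> 0"
  proof
    assume a0: "\<alpha> 0 = 0"
    define b where "b = - \<beta> 0 / D"
    have U0: "U 0 = b *\<^sub>R psi2"
    proof -
      have "D *\<^sub>R U 0 = D *\<^sub>R (b *\<^sub>R psi2)" using Udec[of 0] a0 D0 by (simp add: b_def)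
      then show ?thesis using D0 by (metis scaleR_cancel_left)
    qed
    have "b * b = 1" using init n2 unfolding U0 by simp
    then have b: "b = 1 \<or> b = -1" by algebra
    have "matrix_inv Psi *v U 0 = vector [0, b]"
    proof -
      have "U 0 = Psi *v vector [0, b]" using U0 Psiv by simp
      then show ?thesis by (simp add: matrix_vector_mul_assoc inv)
    qed
    with K0 b S22 show False by (auto simp: Psi_def Let_def)
  qed
  define V where "V t = \<alpha> 0 *\<^sub>R psi1 - (\<beta> 0 * exp ((L2 - L1) * t)) *\<^sub>R psi2" for t
  have UV: "U t = (sgn D / norm (V t)) *\<^sub>R V t" if t: "t \<ge> 0" for t
  proof -
    define E where "E = exp (L1 * t - Q t)"
    have E0: "E > 0" by (simp add: E_def)
    have "\<beta> t = E * (\<beta> 0 * exp ((L2 - L1) * t))"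
      using b_sol[OF t] by (simp add: E_def flip: exp_add) (simp add: algebra_simps)
    then have "D *\<^sub>R U t = E *\<^sub>R V t"
      using Udec[of t] a_sol[OF t] by (simp add: V_def E_def algebra_simps)
    then have UE: "U t = (E / D) *\<^sub>R V t"
    proof -
      assume eq: "D *\<^sub>R U t = E *\<^sub>R V t"
      have "U t = inverse D *\<^sub>R (D *\<^sub>R U t)" using D0 by simp
      also have "\<dots> = (E / D) *\<^sub>R V t" unfolding eq by (simp add: divide_inverse mult.commute)
      finally show ?thesis .
    qed
    have "norm (U t) = 1" using nU[OF t] by (simp add: norm_eq_1)
    then have h: "\<bar>E / D\<bar> * norm (V t) = 1" using UE norm_scaleR by metis
    have "\<bar>E / D\<bar> = E / \<bar>D\<bar>" using E0 by (simp add: abs_div)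
    with h have "norm (V t) = \<bar>D\<bar> / E" using E0 D0 by (simp add: field_simps)
    moreover have "norm (V t) \<noteq> 0" using h by auto
    ultimately have "sgn D / norm (V t) = E / D" using E0 D0 by (cases "D > 0") (auto simp: field_simps)
    then show ?thesis using UE by simp
  qed
  have lim_exp: "((\<lambda>t. exp ((L2 - L1) * t)) \<longlongrightarrow> 0) at_top"
    using L12 by real_asymp
  have limV: "(V \<longlongrightarrow> \<alpha> 0 *\<^sub>R psi1) at_top"
  proof -
    have "(V \<longlongrightarrow> \<alpha> 0 *\<^sub>R psi1 - (\<beta> 0 * 0) *\<^sub>R psi2) at_top"
      unfolding V_def by (intro tendsto_intros lim_exp)
    then show ?thesis by simp
  qed
  have nW: "norm (\<alpha> 0 *\<^sub>R psi1) = \<bar>\<alpha> 0\<bar>" using n1 by (simp add: norm_eq_1[symmetric])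
  have "((\<lambda>t. (sgn D / norm (V t)) *\<^sub>R V t) \<longlongrightarrow> (sgn D / norm (\<alpha> 0 *\<^sub>R psi1)) *\<^sub>R (\<alpha> 0 *\<^sub>R psi1)) at_top"
    using a00 nW by (intro tendsto_intros limV) auto
  moreover have "eventually (\<lambda>t. (sgn D / norm (V t)) *\<^sub>R V t = U t) at_top"
    using UV by (auto simp: eventually_at_top_linorder intro!: exI[of _ 0])
  ultimately have "(U \<longlongrightarrow> (sgn D / norm (\<alpha> 0 *\<^sub>R psi1)) *\<^sub>R (\<alpha> 0 *\<^sub>R psi1)) at_top"
    by (rule Lim_transform_eventually)
  then have limU: "(U \<longlongrightarrow> (sgn D / \<bar>\<alpha> 0\<bar> * \<alpha> 0) *\<^sub>R psi1) at_top"
    unfolding nW by simp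
  have "(sgn D / \<bar>\<alpha> 0\<bar> * \<alpha> 0) *\<^sub>R psi1 \<in> {psi1, - psi1}"
    using a00 D0 by (cases "D > 0"; cases "\<alpha> 0 > 0") (auto simp: sgn_if)
  then show ?thesis using limU S11 by (auto simp: Psi_def Let_def)
qed

end
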